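(* Let $p=p_n\in(0,1)$ with $f_n:=n p_n\to 0$, and let $G\sim\mathcal{G}(n,p_n)$ with $m$ its number of edges. Let $\phi(\delta)=(1+\delta)\ln(1+\delta)-\delta$ for $\delta\ge 0$, and set $$\delta_n=\phi^{-1}\left(\frac{2\ln 2}{f_n}\right),\qquad C_n=\frac{1}{1+(1+\delta_n)\frac{n-1}{n}f_n}.$$ For $1\le u\le n$ define $$w_n(u)=\sum_{i=n-u}^{n}\binom{i}{i-(n-u)}(1-p_n)^{\binom{i-(n-u)}{2}}\,\mathbb{P}\left(m\ge\frac{n^2}{2u}-\frac{n}{2}\right),$$ and $\mathbb{T}^1(n,p)=\sum_{1\le u\le nC_n}w_n(u)$. Then $\mathbb{T}^1(n,p)$ has at most polynomial growth in $n$.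
   Context: $\mathcal{G}(n,p)$ is the binomial random graph on $n$ vertices in which each of the $\binom{n}{2}$ pairs of vertices is an edge with probability $p$, independently. $\phi$ is increasing on $[0,\infty)$, so $\phi^{-1}$ is well defined. The quantity $w_n(u)$ is the paper's bound on the expected number of nodes with potential $u$ in the best-first branch-and-bound search tree for maximum independent set (potential of a partial solution $S\subseteq\{v_1,\dots,v_i\}$ being $|S|+n-i$). *)

theory Defs
  imports "HOL-Probability.Probability" "HOL-Library.Landau_Symbols"
begin

definition vertex_pairs :: "nat \<Rightarrow> nat set set" where
  "vertex_pairs n = {e. \<exists>a b. a < b \<and> b < n \<and> e = {a, b}}"

definition gnp :: "nat \<Rightarrow> real \<Rightarrow> nat set set pmf" where
  "gnp n p = map_pmf (\<lambda>f. {e \<in> vertex_pairs n. f e})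
      (Pi_pmf (vertex_pairs n) False (\<lambda>_. bernoulli_pmf p))"

definition phi :: "real \<Rightarrow> real" where
  "phi \<delta> = (1 + \<delta>) * ln (1 + \<delta>) - \<delta>"

definition phi_inv :: "real \<Rightarrow> real" where
  "phi_inv y = (THE \<delta>. \<delta> \<ge> 0 \<and> phi \<delta> = y)"

definition delta_n :: "(nat \<Rightarrow> real) \<Rightarrow> nat \<Rightarrow> real" where
  "delta_n p n = phi_inv (2 * ln 2 / (real n * p n))"

definition C_n :: "(nat \<Rightarrow> real) \<Rightarrow> nat \<Rightarrow> real" where
  "C_n p n = 1 / (1 + (1 + delta_n p n) * ((real n - 1) / real n) * (real n * p n))"

definition w_n :: "(nat \<Rightarrow> real) \<Rightarrow> nat \<Rightarrow> nat \<Rightarrow> real" where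
  "w_n p n u = (\<Sum>i = n - u..n.
      real (i choose (i - (n - u))) * (1 - p n) ^ ((i - (n - u)) choose 2) *
      measure_pmf.prob (gnp n (p n))
        {E. real (card E) \<ge> (real n)\<^sup>2 / (2 * real u) - real n / 2})"

definition T1 :: "(nat \<Rightarrow> real) \<Rightarrow> nat \<Rightarrow> real" where
  "T1 p n = (\<Sum>u \<in> {u. 1 \<le> u \<and> real u \<le> real n * C_n p n}. w_n p n u)"

end

theory Submission
  imports Defs
begin


lemma phi_strict: assumes "0 \<le> a" "a < b" shows "phi a < phi b"
proof -
  have "phi a < phi b"
  proof (rule DERIV_pos_imp_increasing_open[OF assms(2)])
    fix x assume x: "a < x" "x < b"
    have "DERIV phi x :> ln (1 + x)"
      unfolding phi_def using x assms
      by (auto intro!: derivative_eq_intros)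
    moreover have "ln (1 + x) > 0" using x assms by simp
    ultimately show "\<exists>y. DERIV phi x :> y \<and> y > 0" by blast
  next
    show "continuous_on {a..b} phi" unfolding phi_def using assms
      by (auto intro!: continuous_intros)
  qed
  thus ?thesis .
qed

lemma phi_inv: assumes "y > 0" shows "phi_inv y \<ge> 0 \<and> phi (phi_inv y) = y"
proof -
  define D where "D = y + exp 2"
  have pos: "1 + D > 0" using assms exp_gt_zero[of 2] unfolding D_def by linarith
  have "exp 2 \<le> 1 + D" using assms unfolding D_def by simp
  hence "ln (1 + D) \<ge> 2" using ln_ge_iff[OF pos] by blast
  hence "(1 + D) * ln (1 + D) \<ge> (1 + D) * 2"
    using assms unfolding D_def by (intro mult_left_mono) auto
  hence "phi D \<ge> D + 2" unfolding phi_def by (simp add: algebra_simps)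
  moreover have "D \<ge> y" unfolding D_def using exp_gt_zero[of 2] by linarith
  ultimately have "phi D \<ge> y" by linarith
  moreover have "phi 0 \<le> y" using assms by (simp add: phi_def)
  moreover have "continuous_on {0..D} phi" unfolding phi_def D_def using assms
    by (auto intro!: continuous_intros)
  moreover have "0 \<le> D" using pos assms unfolding D_def by simp
  ultimately obtain x where x: "0 \<le> x" "phi x = y"
    using IVT'[of phi 0 y D] by blast
  have "\<exists>!x. x \<ge> 0 \<and> phi x = y"
  proof (rule ex1I[of _ x])
    show "x \<ge> 0 \<and> phi x = y" using x by simp
    fix z assume z: "z \<ge> 0 \<and> phi z = y"
    show "z = x"
    proof (rule ccontr)
      assume "z \<noteq> x"
      hence "z < x \<or> x < z" by linarith
      thus False using phi_strict[of z x] phi_strict[of x z] x z by auto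
    qed
  qed
  from theI'[OF this] show ?thesis unfolding phi_inv_def .
qed

lemma vertex_pairs_eq: "vertex_pairs n = {B. B \<subseteq> {0..<n} \<and> card B = 2}"
proof (intro set_eqI iffI)
  fix e assume "e \<in> vertex_pairs n"
  thus "e \<in> {B. B \<subseteq> {0..<n} \<and> card B = 2}" unfolding vertex_pairs_def by auto
next
  fix e assume "e \<in> {B. B \<subseteq> {0..<n} \<and> card B = 2}"
  then obtain x y where "e = {x,y}" "x \<noteq> y" "x < n" "y < n" by (auto simp: card_2_iff)
  show "e \<in> vertex_pairs n"
  proof (cases "x < y")
    case True show ?thesis using True \<open>e = {x,y}\<close> \<open>y < n\<close> unfolding vertex_pairs_def
      by (intro CollectI exI[of _ x] exI[of _ y]) auto
  next
    case False hence "y < x" using \<open>x \<noteq> y\<close> by linarith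
    moreover have "e = {y,x}" using \<open>e = {x,y}\<close> by auto
    ultimately show ?thesis using \<open>x < n\<close> unfolding vertex_pairs_def
      by (intro CollectI exI[of _ y] exI[of _ x]) auto
  qed
qed

lemma card_vertex_pairs: "card (vertex_pairs n) = n choose 2"
  unfolding vertex_pairs_eq by (subst n_subsets) auto

lemma finite_vertex_pairs: "finite (vertex_pairs n)"
  unfolding vertex_pairs_eq by (rule finite_subset[of _ "Pow {0..<n}"]) auto



lemma prod_if_pow: "finite V \<Longrightarrow> (\<Prod>e\<in>V. if f e then (c::real) else 1) = c ^ card {e\<in>V. f e}"
  by (simp add: prod.If_cases Int_def conj_commute)

lemma chernoff:
  fixes V :: "'a set" and q lam t :: real
  assumes V: "finite V" and q: "0 \<le> q" "q \<le> 1" and lam: "0 \<le> lam"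
  shows "measure_pmf.prob (Pi_pmf V False (\<lambda>_. bernoulli_pmf q)) {f. t \<le> real (card {e\<in>V. f e})}
     \<le> exp (-lam*t) * exp (real (card V) * q * (exp lam - 1))"
proof -
  define M where "M = Pi_pmf V False (\<lambda>_. bernoulli_pmf q)"
  define u where "u = (\<lambda>f. \<Prod>e\<in>V. (\<lambda>b. if b then exp lam else 1) (f e))"
  have u_eq: "u f = exp (lam * real (card {e\<in>V. f e}))" for f
    unfolding u_def using prod_if_pow[OF V, of f "exp lam"]
    by (simp add: exp_of_nat_mult[symmetric] mult.commute)
  have int: "integrable (measure_pmf M) u"
    unfolding M_def u_def
    by (rule integrable_prod_Pi_pmf[OF V]) (auto intro: integrable_measure_pmf_finite)
  have E: "measure_pmf.expectation M u = (\<Prod>e\<in>V. exp lam * q + (1 - q))"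
    unfolding M_def u_def
    by (subst expectation_prod_Pi_pmf[OF V]) (auto intro: integrable_measure_pmf_finite simp: q)
  have sub: "{f. t \<le> real (card {e\<in>V. f e})} \<subseteq> {x\<in>space (measure_pmf M). exp (lam*t) \<le> u x}"
    using lam by (auto simp: u_eq intro: mult_left_mono)
  have "measure_pmf.prob M {f. t \<le> real (card {e\<in>V. f e})}
        \<le> measure_pmf.prob M {x\<in>space (measure_pmf M). exp (lam*t) \<le> u x}"
    by (rule measure_pmf.finite_measure_mono[OF sub]) simp
  also have "\<dots> \<le> measure_pmf.expectation M u / exp (lam*t)"
    by (rule integral_Markov_inequality_measure[OF int, of UNIV]) (auto simp: u_def intro!: AE_I2 prod_nonneg)
  also have "\<dots> = exp (-lam*t) * (q * exp lam + (1 - q)) ^ card V"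
    by (simp add: E exp_minus field_simps)
  also have "(q * exp lam + (1 - q)) ^ card V \<le> exp (q * (exp lam - 1)) ^ card V"
  proof (rule power_mono)
    show "q * exp lam + (1 - q) \<le> exp (q * (exp lam - 1))"
      using exp_ge_add_one_self[of "q * (exp lam - 1)"] by (simp add: algebra_simps)
    show "0 \<le> q * exp lam + (1 - q)" using q by simp
  qed
  also have "exp (q * (exp lam - 1)) ^ card V = exp (real (card V) * q * (exp lam - 1))"
    by (simp add: exp_of_nat_mult[symmetric] mult.assoc)
  finally show ?thesis unfolding M_def by (simp add: mult_left_mono)
qed



lemma real_choose2: "real (n choose 2) = real n * (real n - 1) / 2"
proof -
  have ev: "even (n * (n - 1))" by (cases "even n") auto
  have "real (n choose 2) = real (n * (n - 1)) / 2"
    unfolding choose_two using ev by (simp add: real_of_nat_div)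
  also have "\<dots> = real n * (real n - 1) / 2"
    by (cases n) (auto simp: algebra_simps)
  finally show ?thesis .
qed

lemma prob_bound:
  fixes p :: "nat \<Rightarrow> real"
  assumes p: "0 < p n" "p n < 1" and n: "n \<ge> 1" and u: "1 \<le> u" "real u \<le> real n * C_n p n"
  shows "measure_pmf.prob (gnp n (p n))
           {E. real (card E) \<ge> (real n)\<^sup>2 / (2 * real u) - real n / 2} \<le> 2 / 2 ^ n"
proof -
  define q where "q = p n"
  define y where "y = 2 * ln 2 / (real n * q)"
  define \<delta> where "\<delta> = delta_n p n"
  define N where "N = real n * (real n - 1) / 2"
  define t where "t = (real n)\<^sup>2 / (2 * real u) - real n / 2"
  define lam where "lam = ln (1 + \<delta>)"
  have q: "0 < q" "q < 1" using p unfolding q_def by auto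
  have nr: "real n \<ge> 1" using n by simp
  have ypos: "y > 0" unfolding y_def using q nr by simp
  have \<delta>: "\<delta> \<ge> 0" "phi \<delta> = y"
    using phi_inv[OF ypos] unfolding \<delta>_def delta_n_def y_def q_def by auto
  define D where "D = 1 + (1 + \<delta>) * (real n - 1) * q"
  have D_eq: "1 + (1 + delta_n p n) * ((real n - 1) / real n) * (real n * p n) = D"
    unfolding D_def \<delta>_def q_def using nr by (simp add: field_simps)
  have D1: "D - 1 \<ge> 0" unfolding D_def using \<delta> q nr by simp
  have uD: "real u * D \<le> real n"
    using u(2) D1 unfolding C_n_def D_eq by (simp add: field_simps)
  have ur: "real u \<ge> 1" using u by simp
  have nu: "real n - real u \<ge> real u * (D - 1)" using uD by (simp add: algebra_simps)
  have "t = real n / (2 * real u) * (real n - real u)"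
    unfolding t_def using ur by (simp add: field_simps power2_eq_square)
  also have "\<dots> \<ge> real n / (2 * real u) * (real u * (D - 1))"
    by (rule mult_left_mono[OF nu]) (use ur nr in simp)
  also have "real n / (2 * real u) * (real u * (D - 1)) = real n * (D - 1) / 2"
    using ur by (simp add: field_simps)
  finally have "t \<ge> real n * (D - 1) / 2" .
  hence tge: "t \<ge> (1 + \<delta>) * N * q" unfolding D_def N_def by (simp add: field_simps)
  have lam: "lam \<ge> 0" unfolding lam_def using \<delta> by simp
  have V: "finite (vertex_pairs n)" by (rule finite_vertex_pairs)
  have cardV: "real (card (vertex_pairs n)) = N"
    unfolding N_def card_vertex_pairs real_choose2 ..
  have "measure_pmf.prob (gnp n (p n)) {E. real (card E) \<ge> t}
      = measure_pmf.prob (Pi_pmf (vertex_pairs n) False (\<lambda>_. bernoulli_pmf q))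
          {f. t \<le> real (card {e\<in>vertex_pairs n. f e})}"
    unfolding gnp_def q_def by (simp add: vimage_def)
  also have "\<dots> \<le> exp (-lam*t) * exp (N * q * (exp lam - 1))"
    using chernoff[OF V, of q lam t] q lam cardV by simp
  also have "exp lam - 1 = \<delta>" unfolding lam_def using \<delta> by simp
  also have "exp (-lam*t) * exp (N * q * \<delta>) = exp (N * q * \<delta> - lam * t)"
    by (simp add: exp_add[symmetric])
  also have "\<dots> \<le> exp (N * q * \<delta> - lam * ((1 + \<delta>) * N * q))"
    using mult_left_mono[OF tge lam] by simp
  also have "N * q * \<delta> - lam * ((1 + \<delta>) * N * q) = - (N * q * phi \<delta>)"
    unfolding phi_def lam_def by (simp add: algebra_simps)
  also have "N * q * phi \<delta> = (real n - 1) * ln 2"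
    unfolding \<delta>(2) y_def N_def using q nr by (simp add: field_simps)
  also have "exp (- ((real n - 1) * ln 2)) = 2 / 2 ^ n"
  proof -
    have "exp (- ((real n - 1) * ln 2)) = exp (ln 2) / exp (real n * ln 2)"
      by (simp add: exp_diff algebra_simps del: exp_ln)
    also have "\<dots> = 2 / 2 ^ n" by (simp add: exp_of_nat_mult)
    finally show ?thesis .
  qed
  finally show ?thesis unfolding t_def .
qed



lemma C_n_le1:
  fixes p :: "nat \<Rightarrow> real"
  assumes p: "0 < p n" and n: "n \<ge> 1"
  shows "C_n p n \<le> 1"
proof -
  have ypos: "2 * ln 2 / (real n * p n) > 0" using p n by simp
  have "delta_n p n \<ge> 0" using phi_inv[OF ypos] unfolding delta_n_def by auto
  hence "(1 + delta_n p n) * ((real n - 1) / real n) * (real n * p n) \<ge> 0"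
    using p n by simp
  thus ?thesis unfolding C_n_def by simp
qed

lemma w_bound:
  fixes p :: "nat \<Rightarrow> real"
  assumes p: "0 < p n" "p n < 1" and n: "n \<ge> 1" and u: "1 \<le> u" "real u \<le> real n * C_n p n"
  shows "0 \<le> w_n p n u \<and> w_n p n u \<le> 2 * (real n + 1)"
proof -
  define P where "P = measure_pmf.prob (gnp n (p n))
        {E. real (card E) \<ge> (real n)\<^sup>2 / (2 * real u) - real n / 2}"
  have P: "0 \<le> P" "P \<le> 2 / 2 ^ n" using prob_bound[OF p n u] unfolding P_def by auto
  have tm: "0 \<le> real (i choose k) * (1 - p n) ^ j * P \<and>
              real (i choose k) * (1 - p n) ^ j * P \<le> 2" if i: "i \<le> n" for i k j
  proof
    show "0 \<le> real (i choose k) * (1 - p n) ^ j * P" using p P by simp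
    have b: "real (i choose k) \<le> 2 ^ n"
    proof -
      have "i choose k \<le> 2 ^ i" by (rule binomial_le_pow2)
      also have "(2::nat) ^ i \<le> 2 ^ n" using i by (simp add: power_increasing)
      finally show ?thesis by (metis of_nat_le_iff of_nat_numeral of_nat_power)
    qed
    have c: "(1 - p n) ^ j \<le> 1" "0 \<le> (1 - p n) ^ j" using p by (auto intro: power_le_one)
    have "real (i choose k) * (1 - p n) ^ j * P \<le> 2 ^ n * 1 * (2 / 2 ^ n)"
      by (intro mult_mono b c P) (use c P in auto)
    also have "\<dots> = 2" by simp
    finally show "real (i choose k) * (1 - p n) ^ j * P \<le> 2" .
  qed
  have eq: "w_n p n u = (\<Sum>i = n - u..n. real (i choose (i - (n - u))) * (1 - p n) ^ ((i - (n - u)) choose 2) * P)"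
    unfolding w_n_def P_def ..
  have A: "(\<Sum>i = n - u..n. real (i choose (i - (n - u))) * (1 - p n) ^ ((i - (n - u)) choose 2) * P) \<le> real (card {n - u..n}) * 2"
    by (rule sum_bounded_above) (use tm in auto)
  have B: "real (card {n - u..n}) \<le> real n + 1" by simp
  have C: "0 \<le> (\<Sum>i = n - u..n. real (i choose (i - (n - u))) * (1 - p n) ^ ((i - (n - u)) choose 2) * P)"
    by (rule sum_nonneg) (use tm in auto)
  have B': "real (card {n - u..n}) * 2 \<le> 2 * (real n + 1)" using B by simp
  show ?thesis unfolding eq using C order.trans[OF A B'] by simp
qed

theorem proposition1:
  fixes p :: "nat \<Rightarrow> real"
  assumes "\<And>n. 0 < p n \<and> p n < 1"
    and "(\<lambda>n. real n * p n) \<longlonglongrightarrow> 0"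
  shows "\<exists>k::nat. T1 p \<in> O(\<lambda>n. real n ^ k)"
proof (intro exI[of _ 2] bigoI[where c = 4])
  show "\<forall>\<^sub>F n in at_top. norm (T1 p n) \<le> 4 * norm (real n ^ 2)"
    using eventually_ge_at_top[of 1]
  proof eventually_elim
    case (elim n)
    have p: "0 < p n" "p n < 1" using assms(1) by auto
    define S where "S = {u. 1 \<le> u \<and> real u \<le> real n * C_n p n}"
    have Ssub: "S \<subseteq> {1..n}"
    proof
      fix u assume "u \<in> S"
      hence "1 \<le> u" "real u \<le> real n * C_n p n" unfolding S_def by auto
      moreover have "real n * C_n p n \<le> real n"
        using mult_left_le[OF C_n_le1[of p n, OF p(1) elim], of "real n"] by simp
      ultimately show "u \<in> {1..n}" by simp
    qed
    have fin: "finite S" using Ssub finite_subset by blast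
    have cS: "real (card S) \<le> real n" using card_mono[OF _ Ssub] by simp
    have wb: "0 \<le> w_n p n u \<and> w_n p n u \<le> 2 * (real n + 1)" if "u \<in> S" for u
      using w_bound[of p n, OF p elim] that unfolding S_def by auto
    have "T1 p n \<le> real (card S) * (2 * (real n + 1))"
      unfolding T1_def S_def[symmetric] by (rule sum_bounded_above) (use wb in auto)
    also have "\<dots> \<le> real n * (2 * (real n + 1))"
      by (rule mult_right_mono[OF cS]) simp
    also have "\<dots> \<le> 4 * real n ^ 2" using elim by (simp add: power2_eq_square algebra_simps)
    finally have up: "T1 p n \<le> 4 * real n ^ 2" .
    have "0 \<le> T1 p n" unfolding T1_def S_def[symmetric] by (rule sum_nonneg) (use wb in auto)
    thus ?case using up by simp
  qed
qed

end
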